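(* Let $(D,\sqsubseteq)$ be a dcpo with its Scott topology and let $A\in\mathbf{\Sigma}^0_2(D)$. If $(x_i)_{i\in I}$ is a family indexed by a directed preordered set $I$ with $i\le j\Rightarrow x_i\sqsubseteq x_j$, and its supremum $\bigsqcup_i x_i$ belongs to $A$, then there is $i_0\in I$ such that $x_i\in A$ for all $i\ge i_0$. In particular, if $D$ is a continuous domain with basis $B\subseteq D$ and $x\in A$, then there exists $b\in B$ with $b\ll x$ and $\llbracket b,x]\subseteq A$.
   Context: A dcpo is a poset in which every nonempty directed subset has a supremum; its Scott topology consists of upsets $O$ such that every directed set with supremum in $O$ has an element in $O$. $\mathbf{\Sigma}^0_2(D)$: countable unions of sets $U\setminus V$ with $U,V$ Scott open. Way-below: $x\ll y$ iff for every directed $S$ with $y\sqsubseteq\sqcup S$ there is $s\in S$ with $x\sqsubseteq s$. A continuous domain with basis $B$ is a dcpo with $B\subseteq D$ such that for every $x$, $B\cap\{z:z\ll x\}$ is directed with supremum $x$. $\llbracket b,x]=\{y\in D: b\ll y\sqsubseteq x\}$. *)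

theory Defs
  imports Main
begin

text \<open>The dcpo is the whole type 'a with its partial order.\<close>

definition directed :: "'a::order set \<Rightarrow> bool" where
  "directed S \<longleftrightarrow> S \<noteq> {} \<and> (\<forall>x\<in>S. \<forall>y\<in>S. \<exists>z\<in>S. x \<le> z \<and> y \<le> z)"

definition is_lub :: "'a::order set \<Rightarrow> 'a \<Rightarrow> bool" where
  "is_lub S s \<longleftrightarrow> (\<forall>x\<in>S. x \<le> s) \<and> (\<forall>u. (\<forall>x\<in>S. x \<le> u) \<longrightarrow> s \<le> u)"

definition dsup :: "'a::order set \<Rightarrow> 'a" where
  "dsup S = (THE s. is_lub S s)"

definition dcpo :: "'a::order itself \<Rightarrow> bool" where
  "dcpo _ \<longleftrightarrow> (\<forall>S::'a set. directed S \<longrightarrow> (\<exists>s. is_lub S s))"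

definition scott_open :: "'a::order set \<Rightarrow> bool" where
  "scott_open W \<longleftrightarrow> (\<forall>x y. x \<in> W \<and> x \<le> y \<longrightarrow> y \<in> W) \<and>
     (\<forall>S s. directed S \<and> is_lub S s \<and> s \<in> W \<longrightarrow> S \<inter> W \<noteq> {})"

definition Sigma02 :: "'a::order set \<Rightarrow> bool" where
  "Sigma02 A \<longleftrightarrow> (\<exists>U V :: nat \<Rightarrow> 'a set. (\<forall>n. scott_open (U n) \<and> scott_open (V n)) \<and>
     A = (\<Union>n. U n - V n))"

definition way_below :: "'a::order \<Rightarrow> 'a \<Rightarrow> bool" (infix "\<lless>" 50) where
  "x \<lless> y \<longleftrightarrow> (\<forall>S s. directed S \<and> is_lub S s \<and> y \<le> s \<longrightarrow> (\<exists>t\<in>S. x \<le> t))"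

definition continuous_basis :: "'a::order set \<Rightarrow> bool" where
  "continuous_basis B \<longleftrightarrow> (\<forall>x. directed {b\<in>B. b \<lless> x} \<and> is_lub {b\<in>B. b \<lless> x} x)"

end

theory Submission
  imports Defs
begin

lemma lub_unique: "is_lub S s \<Longrightarrow> is_lub S t \<Longrightarrow> s = t"
  unfolding is_lub_def by (meson order_antisym)

lemma dsup_eq: "is_lub S s \<Longrightarrow> dsup S = s"
  unfolding dsup_def by (rule the_equality, assumption, rule lub_unique[symmetric], assumption+)

lemma wb_le: "b \<lless> z \<Longrightarrow> b \<le> z"
proof -
  assume a: "b \<lless> z"
  have "directed {z}" unfolding directed_def by auto
  moreover have "is_lub {z} z" unfolding is_lub_def by auto
  ultimately show ?thesis using a unfolding way_below_def by blast
qed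

theorem proposition4p4:
  fixes A :: "'a::order set"
  assumes "dcpo TYPE('a)" and "Sigma02 A"
  shows "(\<forall>(I :: 'i set) (R :: 'i \<Rightarrow> 'i \<Rightarrow> bool) (x :: 'i \<Rightarrow> 'a).
            (\<forall>i\<in>I. R i i) \<and> (\<forall>i\<in>I. \<forall>j\<in>I. \<forall>k\<in>I. R i j \<and> R j k \<longrightarrow> R i k) \<and>
            I \<noteq> {} \<and> (\<forall>i\<in>I. \<forall>j\<in>I. \<exists>k\<in>I. R i k \<and> R j k) \<and>
            (\<forall>i\<in>I. \<forall>j\<in>I. R i j \<longrightarrow> x i \<le> x j) \<and>
            dsup (x ` I) \<in> A
          \<longrightarrow> (\<exists>i0\<in>I. \<forall>i\<in>I. R i0 i \<longrightarrow> x i \<in> A))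
      \<and> (\<forall>B y. continuous_basis B \<and> y \<in> A \<longrightarrow>
            (\<exists>b\<in>B. b \<lless> y \<and> {z. b \<lless> z \<and> z \<le> y} \<subseteq> A))"
proof -
  obtain U V :: "nat \<Rightarrow> 'a set" where UV: "\<And>n. scott_open (U n)" "\<And>n. scott_open (V n)"
    and A: "A = (\<Union>n. U n - V n)" using assms(2) unfolding Sigma02_def by metis
  have up: "\<And>W a c. scott_open W \<Longrightarrow> a \<in> W \<Longrightarrow> a \<le> c \<Longrightarrow> c \<in> W"
  proof -
    fix W a c
    assume "scott_open W" "a \<in> W" "a \<le> c"
    then have "\<forall>x y. x \<in> W \<and> x \<le> y \<longrightarrow> y \<in> W" unfolding scott_open_def by (elim conjE)
    then show "c \<in> W" using \<open>a \<in> W\<close> \<open>a \<le> c\<close> by blast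
  qed
  have hit: "\<And>W S s. scott_open W \<Longrightarrow> directed S \<Longrightarrow> is_lub S s \<Longrightarrow> s \<in> W \<Longrightarrow> \<exists>t\<in>S. t \<in> W"
    unfolding scott_open_def by (metis disjoint_iff)
  show ?thesis
  proof (intro conjI allI impI)
    fix I :: "'i set" and R x
    assume h: "(\<forall>i\<in>I. R i i) \<and> (\<forall>i\<in>I. \<forall>j\<in>I. \<forall>k\<in>I. R i j \<and> R j k \<longrightarrow> R i k) \<and>
            I \<noteq> {} \<and> (\<forall>i\<in>I. \<forall>j\<in>I. \<exists>k\<in>I. R i k \<and> R j k) \<and>
            (\<forall>i\<in>I. \<forall>j\<in>I. R i j \<longrightarrow> x i \<le> x j) \<and>
            dsup (x ` I) \<in> A"
    have Ine: "I \<noteq> {}" and Rd: "\<And>i j. i\<in>I \<Longrightarrow> j\<in>I \<Longrightarrow> \<exists>k\<in>I. R i k \<and> R j k"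
      and mono: "\<And>i j. i\<in>I \<Longrightarrow> j\<in>I \<Longrightarrow> R i j \<Longrightarrow> x i \<le> x j"
      and sA: "dsup (x ` I) \<in> A"
    proof -
      have h3: "I \<noteq> {}" using h by blast
      have h4: "\<forall>i\<in>I. \<forall>j\<in>I. \<exists>k\<in>I. R i k \<and> R j k" using h by blast
      have h5: "\<forall>i\<in>I. \<forall>j\<in>I. R i j \<longrightarrow> x i \<le> x j" using h by blast
      have h6: "dsup (x ` I) \<in> A" using h by blast
      show "I \<noteq> {}" by (rule h3)
      show "\<And>i j. i\<in>I \<Longrightarrow> j\<in>I \<Longrightarrow> \<exists>k\<in>I. R i k \<and> R j k" using h4 by blast
      show "\<And>i j. i\<in>I \<Longrightarrow> j\<in>I \<Longrightarrow> R i j \<Longrightarrow> x i \<le> x j" using h5 by blast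
      show "dsup (x ` I) \<in> A" by (rule h6)
    qed
    have dir: "directed (x ` I)" unfolding directed_def
    proof (intro conjI ballI)
      show "x ` I \<noteq> {}" using Ine by blast
      fix a c assume "a \<in> x ` I" "c \<in> x ` I"
      then obtain i j where "i \<in> I" "j \<in> I" "a = x i" "c = x j" by blast
      then obtain k where "k \<in> I" "R i k" "R j k" using Rd by blast
      then show "\<exists>z\<in>x ` I. a \<le> z \<and> c \<le> z" using mono \<open>i\<in>I\<close> \<open>j\<in>I\<close> \<open>a = x i\<close> \<open>c = x j\<close> by blast
    qed
    then obtain s where s: "is_lub (x ` I) s" using assms(1) unfolding dcpo_def by blast
    then have sd: "dsup (x ` I) = s" by (rule dsup_eq)
    then obtain n where n: "s \<in> U n" "s \<notin> V n" using sA A by blast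
    then obtain t where "t \<in> x ` I" "t \<in> U n" using hit[OF UV(1) dir s] by blast
    then obtain i0 where i0: "i0 \<in> I" "x i0 \<in> U n" by blast
    show "\<exists>i0\<in>I. \<forall>i\<in>I. R i0 i \<longrightarrow> x i \<in> A"
    proof (intro bexI[OF _ i0(1)] ballI impI)
      fix i assume i: "i \<in> I" "R i0 i"
      have "x i \<in> U n" using up[OF UV(1) i0(2) mono[OF i0(1) i(1) i(2)]] .
      moreover have "x i \<le> s" using s i unfolding is_lub_def by blast
      then have "x i \<notin> V n" using up[OF UV(2)] n(2) by blast
      ultimately show "x i \<in> A" using A by blast
    qed
  next
    fix B :: "'a set" and y :: 'a
    assume h: "continuous_basis B \<and> y \<in> A"
    then obtain n where n: "y \<in> U n" "y \<notin> V n" using A by blast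
    have d: "directed {b\<in>B. b \<lless> y}" "is_lub {b\<in>B. b \<lless> y} y"
      using h unfolding continuous_basis_def by auto
    obtain b where b: "b \<in> B" "b \<lless> y" "b \<in> U n" using hit[OF UV(1) d n(1)] by blast
    show "\<exists>b\<in>B. b \<lless> y \<and> {z. b \<lless> z \<and> z \<le> y} \<subseteq> A"
    proof (intro bexI[OF _ b(1)] conjI subsetI)
      show "b \<lless> y" by (rule b(2))
      fix z assume "z \<in> {z. b \<lless> z \<and> z \<le> y}"
      then have z: "b \<lless> z" "z \<le> y" by auto
      have "z \<in> U n" using up[OF UV(1) b(3) wb_le[OF z(1)]] .
      moreover have "z \<notin> V n" using up[OF UV(2)] n(2) z(2) by blast
      ultimately show "z \<in> A" using A by blast
    qed
  qed
qed

end
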